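(* Let $\mu_1$ be an LTI probability measure on $\{0,1\}^{\{0,1\}}$ and set $c_0=\mu_1(00)$, $c_1=\mu_1(11)$, $c_2=\mu_1(01)+\mu_1(10)$. If $L\ge2$ is even, $\mu_1$ has an extension to a translation invariant probability measure on $Y_L=\{0,1\}^{\mathbb{Z}_L}$. If $L\ge3$ is odd, $\mu_1$ has such an extension if and only if $c_2\le1-1/L$.
   Context: $\mathbb{Z}_L$ is the cycle of $L$ sites with translations mod $L$; an extension to $Y_L$ is a rotation-invariant probability measure on $Y_L$ whose marginal on sites $0,1$ is $\mu_1$. For $k=1$, LTI means $\mu_1(01)=\mu_1(10)$. *)

theory Defs
  imports "HOL-Probability.Probability_Mass_Function"
begin

text \<open>Configurations on the cycle Z_L = {0,...,L-1}, encoded as functions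
  nat => bool that vanish outside {0..<L}.  Y_L is the set of such configurations.\<close>

definition Y :: "nat \<Rightarrow> (nat \<Rightarrow> bool) set" where
  "Y L = {x. \<forall>i\<ge>L. \<not> x i}"

definition rot :: "nat \<Rightarrow> (nat \<Rightarrow> bool) \<Rightarrow> (nat \<Rightarrow> bool)" where
  "rot L x = (\<lambda>i. if i < L then x ((i + 1) mod L) else False)"

text \<open>mu1 is a probability measure on {0,1}^{0,1}: pattern (a,b) means site 0 = a, site 1 = b
  (True = 1). LTI for k = 1 means mu1(01) = mu1(10).\<close>
definition LTI :: "(bool \<times> bool) pmf \<Rightarrow> bool" where
  "LTI \<mu>1 \<longleftrightarrow> pmf \<mu>1 (False, True) = pmf \<mu>1 (True, False)"

definition has_extension :: "nat \<Rightarrow> (bool \<times> bool) pmf \<Rightarrow> bool" where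
  "has_extension L \<mu>1 \<longleftrightarrow>
     (\<exists>\<nu> :: (nat \<Rightarrow> bool) pmf. set_pmf \<nu> \<subseteq> Y L \<and> map_pmf (rot L) \<nu> = \<nu> \<and>
        map_pmf (\<lambda>x. (x 0, x 1)) \<nu> = \<mu>1)"

end

theory Submission
  imports Defs
begin

definition shift :: "nat \<Rightarrow> nat \<Rightarrow> (nat \<Rightarrow> bool) \<Rightarrow> (nat \<Rightarrow> bool)" where
  "shift L k x = (\<lambda>j. if j < L then x ((j + k) mod L) else False)"

definition orb :: "nat \<Rightarrow> (nat \<Rightarrow> bool) \<Rightarrow> (nat \<Rightarrow> bool) pmf" where
  "orb L x = map_pmf (\<lambda>k. shift L k x) (pmf_of_set {..<L})"

definition marg :: "nat \<Rightarrow> (nat \<Rightarrow> bool) \<Rightarrow> (bool \<times> bool) pmf" where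
  "marg L x = map_pmf (\<lambda>x. (x 0, x 1)) (orb L x)"

lemma rot_shift: "rot L (shift L k x) = shift L (Suc k) x"
  unfolding rot_def shift_def by (rule ext) (simp add: mod_add_left_eq)

lemma shift_mod: "shift L (k mod L) x = shift L k x"
  unfolding shift_def by (rule ext) (simp add: mod_add_right_eq)

lemma shift_Y: "shift L k x \<in> Y L"
  unfolding shift_def Y_def by auto

lemma orb_Y: "set_pmf (orb L x) \<subseteq> Y L"
  unfolding orb_def using shift_Y by auto

lemma orb_rot:
  assumes "L > 0"
  shows "map_pmf (rot L) (orb L x) = orb L x"
proof -
  have im: "(\<lambda>k. Suc k mod L) ` {..<L} = {..<L}"
  proof
    show "(\<lambda>k. Suc k mod L) ` {..<L} \<subseteq> {..<L}" using assms by auto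
    show "{..<L} \<subseteq> (\<lambda>k. Suc k mod L) ` {..<L}"
    proof
      fix j assume j: "j \<in> {..<L}"
      show "j \<in> (\<lambda>k. Suc k mod L) ` {..<L}"
      proof (cases j)
        case 0
        then have "j = Suc (L - 1) mod L" using assms by simp
        moreover have "L - 1 \<in> {..<L}" using assms by simp
        ultimately show ?thesis by (rule image_eqI)
      next
        case (Suc i)
        then have "j = Suc i mod L" using j by simp
        moreover have "i \<in> {..<L}" using j Suc by simp
        ultimately show ?thesis by (rule image_eqI)
      qed
    qed
  qed
  have inj: "inj_on (\<lambda>k. Suc k mod L) {..<L}"
    by (rule eq_card_imp_inj_on) (simp_all add: im)
  have U: "map_pmf (\<lambda>k. Suc k mod L) (pmf_of_set {..<L}) = pmf_of_set {..<L}"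
  proof -
    have "0 \<in> {..<L}" using assms by simp
    then have ne: "{..<L} \<noteq> {}" by blast
    show ?thesis using map_pmf_of_set_inj[OF inj ne finite_lessThan] im by simp
  qed
  have "map_pmf (rot L) (orb L x) = map_pmf (\<lambda>k. shift L (Suc k mod L) x) (pmf_of_set {..<L})"
    unfolding orb_def pmf.map_comp by (simp add: o_def rot_shift shift_mod)
  also have "\<dots> = map_pmf (\<lambda>k. shift L k x) (map_pmf (\<lambda>k. Suc k mod L) (pmf_of_set {..<L}))"
    by (simp add: pmf.map_comp o_def)
  also have "\<dots> = orb L x" by (simp add: U orb_def)
  finally show ?thesis .
qed

lemma pmf_marg:
  assumes "L \<ge> 2"
  shows "pmf (marg L x) y = real (card {k. k < L \<and> (x k, x (Suc k mod L)) = y}) / real L"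
proof -
  have "marg L x = map_pmf (\<lambda>k. (x k, x (Suc k mod L))) (pmf_of_set {..<L})"
    unfolding marg_def orb_def pmf.map_comp o_def
  proof (intro map_pmf_cong refl)
    have "set_pmf (pmf_of_set {..<L}) = {..<L}" using assms by (intro set_pmf_of_set) (auto simp: lessThan_empty_iff)
    moreover fix k assume "k \<in> set_pmf (pmf_of_set {..<L})"
    ultimately show "((shift L k x) 0, (shift L k x) 1) = (x k, x (Suc k mod L))"
      using assms by (auto simp: shift_def)
  qed
  moreover have "{..<L} \<inter> (\<lambda>k. (x k, x (Suc k mod L))) -` {y} = {k. k < L \<and> (x k, x (Suc k mod L)) = y}"
    by auto
  moreover have ne: "{..<L} \<noteq> {}"
  proof -
    have "0 \<in> {..<L}" using assms by simp
    then show ?thesis by blast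
  qed
  ultimately have "pmf (marg L x) y = card ({..<L} \<inter> (\<lambda>k. (x k, x (Suc k mod L))) -` {y}) / card {..<L}"
    by (simp only: pmf_map measure_pmf_of_set[OF ne finite_lessThan])
  then show ?thesis using \<open>{..<L} \<inter> _ = _\<close> by simp
qed

lemma card_par: "card {k. k < 2 * m \<and> odd k = c} = m"
proof -
  have "{k. k < 2 * m \<and> odd k = c} = (\<lambda>i. 2 * i + (if c then 1 else 0)) ` {..<m}"
  proof (rule set_eqI, rule iffI)
    fix k assume "k \<in> {k. k < 2 * m \<and> odd k = c}"
    then have "k = 2 * (k div 2) + (if c then 1 else 0)" "k div 2 < m" by auto
    then show "k \<in> (\<lambda>i. 2 * i + (if c then 1 else 0)) ` {..<m}" by blast
  qed (auto split: if_splits)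
  moreover have "inj_on (\<lambda>i. 2 * i + (if c then 1 else 0::nat)) {..<m}" by (auto simp: inj_on_def)
  ultimately show ?thesis by (simp add: card_image)
qed

lemma card_par_even: "even n \<Longrightarrow> card {k. k < n \<and> odd k = c} = n div 2"
  using card_par[of "n div 2" c] by simp

lemma marg_zero: "L \<ge> 2 \<Longrightarrow> pmf (marg L (\<lambda>_. False)) y = (if y = (False, False) then 1 else 0)"
  by (auto simp: pmf_marg)

lemma marg_one: "L \<ge> 2 \<Longrightarrow> pmf (marg L (\<lambda>i. i < L)) y = (if y = (True, True) then 1 else 0)"
proof -
  assume L: "L \<ge> 2"
  have "{k. k < L \<and> (k < L, Suc k mod L < L) = y} = (if y = (True, True) then {..<L} else {})"
    using L by auto
  then show ?thesis using L by (simp add: pmf_marg)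
qed

lemma marg_alt:
  assumes "L \<ge> 2" "even L"
  shows "pmf (marg L (\<lambda>i. i < L \<and> odd i)) (u, v) = (if u \<noteq> v then 1/2 else 0)"
proof -
  have pk: "k < L \<Longrightarrow> (k < L \<and> odd k, Suc k mod L < L \<and> odd (Suc k mod L)) = (odd k, even k)" for k
  proof -
    assume k: "k < L"
    show ?thesis
    proof (cases "Suc k < L")
      case True then show ?thesis using k by simp
    next
      case False then have "Suc k = L" using k by simp
      then show ?thesis using assms k by auto
    qed
  qed
  have "{k. k < L \<and> (k < L \<and> odd k, Suc k mod L < L \<and> odd (Suc k mod L)) = (u, v)}
        = {k. k < L \<and> (odd k, even k) = (u, v)}"
  proof -
    have pk': "(k < L \<and> (k < L \<and> odd k, Suc k mod L < L \<and> odd (Suc k mod L)) = (u, v))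
       = (k < L \<and> (odd k, even k) = (u, v))" for k
    proof (cases "k < L")
      case True
      have eq: "(k < L \<and> odd k, Suc k mod L < L \<and> odd (Suc k mod L)) = (odd k, even k)"
        by (rule pk[OF True])
      show ?thesis by (simp only: eq)
    qed simp
    show ?thesis by (simp only: pk')
  qed
  also have "\<dots> = (if u \<noteq> v then {k. k < L \<and> odd k = u} else {})" by auto
  finally have S: "{k. k < L \<and> (k < L \<and> odd k, Suc k mod L < L \<and> odd (Suc k mod L)) = (u, v)}
      = (if u \<noteq> v then {k. k < L \<and> odd k = u} else {})" .
  have P: "pmf (marg L (\<lambda>i. i < L \<and> odd i)) (u, v) = real (card {k. k < L \<and> (k < L \<and> odd k, Suc k mod L < L \<and> odd (Suc k mod L)) = (u, v)}) / real L"
    by (rule pmf_marg[OF assms(1)])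
  show ?thesis
  proof (cases "u \<noteq> v")
    case True
    have c: "card {k. k < L \<and> odd k = u} = L div 2" by (rule card_par_even[OF assms(2)])
    have "real (L div 2) = real L / 2" using assms(2) by (simp add: real_of_nat_div)
    then show ?thesis using P S True c assms(1) by simp
  next
    case False
    then show ?thesis using P S by simp
  qed
qed

lemma marg_def1:
  assumes "L \<ge> 3" "odd L"
  shows "pmf (marg L (\<lambda>i. i < L \<and> (odd i \<noteq> b))) (u, v) =
     (if u = v then (if u = b then 1 / real L else 0) else real ((L - 1) div 2) / real L)"
proof -
  let ?x = "\<lambda>i. i < L \<and> (odd i \<noteq> b)"
  have pk: "k < L \<Longrightarrow> (?x k, ?x (Suc k mod L)) = (if k = L - 1 then (b, b) else (odd k \<noteq> b, even k \<noteq> b))" for k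
  proof -
    assume k: "k < L"
    show ?thesis
    proof (cases "Suc k < L")
      case True then show ?thesis using k by auto
    next
      case False then have "Suc k = L" using k by simp
      then show ?thesis using assms k by auto
    qed
  qed
  have pk': "(k < L \<and> (?x k, ?x (Suc k mod L)) = (u, v))
        = (k < L \<and> (if k = L - 1 then (b, b) else (odd k \<noteq> b, even k \<noteq> b)) = (u, v))" for k
  proof (cases "k < L")
    case True
    have eq: "(?x k, ?x (Suc k mod L)) = (if k = L - 1 then (b, b) else (odd k \<noteq> b, even k \<noteq> b))"
      by (rule pk[OF True])
    show ?thesis by (simp only: eq)
  qed simp
  have S: "{k. k < L \<and> (?x k, ?x (Suc k mod L)) = (u, v)}
        = {k. k < L \<and> (if k = L - 1 then (b, b) else (odd k \<noteq> b, even k \<noteq> b)) = (u, v)}"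
    by (simp only: pk')
  show ?thesis
  proof (cases "u = v")
    case True
    have "{k. k < L \<and> (if k = L - 1 then (b, b) else (odd k \<noteq> b, even k \<noteq> b)) = (u, v)}
       = (if u = b then {L - 1} else {})" using True assms by auto
    then show ?thesis using S True assms by (simp add: pmf_marg)
  next
    case False
    have "{k. k < L \<and> (if k = L - 1 then (b, b) else (odd k \<noteq> b, even k \<noteq> b)) = (u, v)}
       = {k. k < L - 1 \<and> odd k = (u \<noteq> b)}" using False assms by auto
    then show ?thesis using S False assms card_par_even[of "L - 1" "u \<noteq> b"] by (simp add: pmf_marg)
  qed
qed

lemma ext_mix:
  fixes a b c d :: real and X :: "nat \<Rightarrow> nat \<Rightarrow> bool"
  assumes L: "L \<ge> 2" and nn: "a \<ge> 0" "b \<ge> 0" "c \<ge> 0" "d \<ge> 0" and s1: "a + b + c + d = 1"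
    and eq: "\<And>y. pmf \<mu> y = a * pmf (marg L (X 0)) y + b * pmf (marg L (X 1)) y
                 + c * pmf (marg L (X 2)) y + d * pmf (marg L (X 3)) y"
  shows "has_extension L \<mu>"
proof -
  define xs where "xs = [(0::nat, a), (1, b), (2, c), (3, d)]"
  define W where "W = pmf_of_list xs"
  have wf: "pmf_of_list_wf xs" unfolding xs_def
    by (rule pmf_of_list_wfI) (use nn s1 in \<open>auto simp: algebra_simps\<close>)
  have sW: "set_pmf W \<subseteq> {0, 1, 2, 3}" using set_pmf_of_list[OF wf] by (auto simp: W_def xs_def)
  have pW: "pmf W 0 = a" "pmf W (Suc 0) = b" "pmf W 2 = c" "pmf W 3 = d"
    unfolding W_def pmf_pmf_of_list[OF wf] by (simp_all add: xs_def)
  define \<nu> where "\<nu> = bind_pmf W (\<lambda>j. orb L (X j))"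
  have 1: "set_pmf \<nu> \<subseteq> Y L" using orb_Y by (auto simp: \<nu>_def)
  have 2: "map_pmf (rot L) \<nu> = \<nu>" using L unfolding \<nu>_def map_bind_pmf by (simp add: orb_rot)
  have "map_pmf (\<lambda>x. (x 0, x 1)) \<nu> = bind_pmf W (\<lambda>j. marg L (X j))"
    by (simp add: \<nu>_def map_bind_pmf marg_def)
  also have "\<dots> = \<mu>"
  proof (rule pmf_eqI)
    fix y
    have "pmf (bind_pmf W (\<lambda>j. marg L (X j))) y = (\<Sum>j\<in>{0,1,2,3}. pmf W j *\<^sub>R pmf (marg L (X j)) y)"
      unfolding pmf_bind by (rule integral_measure_pmf) (use sW in auto)
    also have "\<dots> = pmf \<mu> y" by (simp add: pW eq)
    finally show "pmf (bind_pmf W (\<lambda>j. marg L (X j))) y = pmf \<mu> y" .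
  qed
  finally show ?thesis unfolding has_extension_def using 1 2 by blast
qed

lemma agree_edge:
  fixes x :: "nat \<Rightarrow> bool"
  assumes "odd L"
  shows "\<exists>i<L. x i = x (Suc i mod L)"
proof (rule ccontr)
  assume "\<not> ?thesis"
  then have d: "\<And>i. i < L \<Longrightarrow> x i \<noteq> x (Suc i mod L)" by blast
  have L0: "L > 0" using assms by (cases L) auto
  have "i < L \<Longrightarrow> x i = (if odd i then \<not> x 0 else x 0)" for i
  proof (induction i)
    case 0 then show ?case by simp
  next
    case (Suc i)
    have ne: "x i \<noteq> x (Suc i)" using d[of i] Suc.prems by simp
    have hi: "x i = (if odd i then \<not> x 0 else x 0)" using Suc.IH Suc.prems by simp
    show ?case
    proof (cases "odd i")
      case True
      then have "x i = (\<not> x 0)" "even (Suc i)" using hi by simp_all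
      then show ?thesis using ne by simp
    next
      case False
      then have "x i = x 0" "odd (Suc i)" using hi by simp_all
      then show ?thesis using ne by simp
    qed
  qed
  then have r: "x (L - 1) = (if odd (L - 1) then \<not> x 0 else x 0)" using L0 by simp
  have ev: "even (L - 1)" using assms L0 by simp
  have "x (L - 1) = x 0" using r ev by simp
  moreover have "x (L - 1) \<noteq> x 0" using d[of "L - 1"] L0 by simp
  ultimately show False by simp
qed

lemma rot_pow: "x \<in> Y L \<Longrightarrow> (rot L ^^ i) x = shift L i x"
proof (induction i)
  case 0 then show ?case by (intro ext) (auto simp: shift_def Y_def)
next
  case (Suc i) then show ?case by (simp add: rot_shift)
qed

lemma necessity:
  assumes L: "L \<ge> 3" "odd L" and ext: "has_extension L \<mu>"
  shows "pmf \<mu> (False, True) + pmf \<mu> (True, False) \<le> 1 - 1 / real L"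
proof -
  obtain \<nu> where sY: "set_pmf \<nu> \<subseteq> Y L" and inv: "map_pmf (rot L) \<nu> = \<nu>"
    and mg: "map_pmf (\<lambda>x. (x 0, x 1)) \<nu> = \<mu>"
    using ext unfolding has_extension_def by blast
  have invp: "map_pmf (rot L ^^ i) \<nu> = \<nu>" for i
  proof (induction i)
    case 0 then show ?case by (simp add: pmf.map_id)
  next
    case (Suc i)
    have "map_pmf (rot L ^^ Suc i) \<nu> = map_pmf (rot L) (map_pmf (rot L ^^ i) \<nu>)"
      by (simp add: pmf.map_comp)
    also have "\<dots> = map_pmf (rot L) \<nu>" using Suc by simp
    also have "\<dots> = \<nu>" by (rule inv)
    finally show ?case .
  qed
  define E where "E i = {x :: nat \<Rightarrow> bool. x i = x (Suc i mod L)}" for i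
  define q where "q = pmf \<mu> (False, False) + pmf \<mu> (True, True)"
  have E0: "measure \<nu> (E 0) = q"
  proof -
    have "(\<lambda>x. (x 0, x 1)) -` {(False, False), (True, True)} = E 0"
      using L by (auto simp: E_def)
    then have "measure \<nu> (E 0) = measure \<mu> {(False, False), (True, True)}"
      by (simp flip: mg)
    also have "\<dots> = q" by (simp add: measure_measure_pmf_finite q_def)
    finally show ?thesis .
  qed
  have Ei: "measure \<nu> (E i) = q" if i: "i < L" for i
  proof -
    have "E i \<inter> set_pmf \<nu> = (rot L ^^ i) -` E 0 \<inter> set_pmf \<nu>"
    proof (rule set_eqI)
      fix x
      show "x \<in> E i \<inter> set_pmf \<nu> \<longleftrightarrow> x \<in> (rot L ^^ i) -` E 0 \<inter> set_pmf \<nu>"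
      proof (cases "x \<in> set_pmf \<nu>")
        case True
        then have "x \<in> Y L" using sY by blast
        then show ?thesis using True i L by (simp add: rot_pow E_def shift_def)
      qed simp
    qed
    then have "measure \<nu> (E i) = measure \<nu> ((rot L ^^ i) -` E 0)"
      by (metis measure_Int_set_pmf)
    also have "\<dots> = measure (map_pmf (rot L ^^ i) \<nu>) (E 0)" by simp
    also have "\<dots> = q" using invp E0 by simp
    finally show ?thesis .
  qed
  have "1 = measure \<nu> (set_pmf \<nu>)"
    using measure_Int_set_pmf[of \<nu> UNIV] by (simp add: measure_pmf.prob_space)
  also have "\<dots> = measure \<nu> ((\<Union>i\<in>{..<L}. E i) \<inter> set_pmf \<nu>)"
  proof -
    have "set_pmf \<nu> \<subseteq> (\<Union>i\<in>{..<L}. E i)" using agree_edge[OF L(2)] by (auto simp: E_def)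
    then show ?thesis by (simp add: Int_absorb1)
  qed
  also have "\<dots> = measure \<nu> (\<Union>i\<in>{..<L}. E i)" by (rule measure_Int_set_pmf)
  also have "\<dots> \<le> (\<Sum>i\<in>{..<L}. measure \<nu> (E i))"
    by (rule measure_pmf.finite_measure_subadditive_finite) auto
  also have "\<dots> = real L * q" using Ei by simp
  finally have 1: "1 \<le> real L * q" .
  have U: "(UNIV :: (bool \<times> bool) set) = {(False, False), (False, True), (True, False), (True, True)}"
    by auto
  have "(\<Sum>y\<in>UNIV. pmf \<mu> y) = 1" by (rule sum_pmf_eq_1) auto
  then have s: "q + pmf \<mu> (False, True) + pmf \<mu> (True, False) = 1"
    by (simp add: U q_def algebra_simps)
  have "L > 0" using L by simp
  moreover have "q = 1 - pmf \<mu> (False, True) - pmf \<mu> (True, False)" using s by simp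
  ultimately have "1 \<le> real L * (1 - pmf \<mu> (False, True) - pmf \<mu> (True, False))" using 1 by simp
  then have "1 + real L * (pmf \<mu> (False, True) + pmf \<mu> (True, False)) \<le> real L"
    by (simp add: algebra_simps)
  then show ?thesis using \<open>L > 0\<close> by (simp add: field_simps)
qed

lemma pmf_sum4:
  fixes \<mu> :: "(bool \<times> bool) pmf"
  shows "pmf \<mu> (False, False) + pmf \<mu> (True, True) + pmf \<mu> (False, True) + pmf \<mu> (True, False) = 1"
proof -
  have U: "(UNIV :: (bool \<times> bool) set) = {(False, False), (False, True), (True, False), (True, True)}"
    by auto
  have "(\<Sum>y\<in>UNIV. pmf \<mu> y) = 1" by (rule sum_pmf_eq_1) auto
  then show ?thesis by (simp add: U algebra_simps)
qed

lemma odd_mix: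
  fixes \<mu> :: "(bool \<times> bool) pmf" and g d :: real
  assumes L: "L \<ge> 3" "odd L" and g0: "g \<ge> 0" and d0: "d \<ge> 0"
    and gl: "g \<le> real L * pmf \<mu> (False, False)" and dl: "d \<le> real L * pmf \<mu> (True, True)"
    and gd: "(g + d) * (real L - 1) = real L * (pmf \<mu> (False, True) + pmf \<mu> (True, False))"
    and lti: "pmf \<mu> (False, True) = pmf \<mu> (True, False)"
  shows "has_extension L \<mu>"
proof -
  define c0 where "c0 = pmf \<mu> (False, False)"
  define c1 where "c1 = pmf \<mu> (True, True)"
  define p where "p = pmf \<mu> (False, True)"
  have p2: "pmf \<mu> (True, False) = p" using lti p_def by simp
  have s: "c0 + c1 + 2 * p = 1" using pmf_sum4[of \<mu>] by (simp add: c0_def c1_def p_def p2)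
  have Lp: "real L > 0" using L by simp
  have r: "real ((L - 1) div 2) = (real L - 1) / 2"
  proof -
    have "(L - 1) = 2 * ((L - 1) div 2)" using L by presburger
    then have "real (L - 1) = 2 * real ((L - 1) div 2)" by (metis of_nat_mult of_nat_numeral)
    then show ?thesis using L by (simp add: of_nat_diff)
  qed
  have gd': "(g + d) * (real L - 1) = real L * (2 * p)" using gd p2 p_def by simp
  define X where "X = (\<lambda>j::nat. if j = 0 then (\<lambda>_. False) else if j = 1 then (\<lambda>i. i < L)
      else if j = 2 then (\<lambda>i. i < L \<and> (odd i \<noteq> False)) else (\<lambda>i. i < L \<and> (odd i \<noteq> True)))"
  show ?thesis
  proof (rule ext_mix[where a = "c0 - g / real L" and b = "c1 - d / real L" and c = g and d = d and X = X])
    show "L \<ge> 2" using L by simp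
    show "0 \<le> c0 - g / real L" using gl Lp by (simp add: c0_def field_simps)
    show "0 \<le> c1 - d / real L" using dl Lp by (simp add: c1_def field_simps)
    show "0 \<le> g" "0 \<le> d" by (fact g0, fact d0)
    have "g + d = real L * (2 * p) / (real L - 1)" using gd' L by (simp add: field_simps)
    have "c0 - g / real L + (c1 - d / real L) + g + d = c0 + c1 + (g + d) * (real L - 1) / real L"
      using Lp by (simp add: field_simps)
    also have "\<dots> = 1" using gd' s Lp by simp
    finally show "c0 - g / real L + (c1 - d / real L) + g + d = 1" .
    fix y :: "bool \<times> bool"
    obtain u v where y: "y = (u, v)" by (cases y)
    have L2: "L \<ge> 2" using L by simp
    have m: "pmf (marg L (X 0)) (u, v) = (if (u, v) = (False, False) then 1 else 0)"
            "pmf (marg L (X 1)) (u, v) = (if (u, v) = (True, True) then 1 else 0)"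
            "pmf (marg L (X 2)) (u, v) = (if u = v then (if u = False then 1 / real L else 0) else real ((L - 1) div 2) / real L)"
            "pmf (marg L (X 3)) (u, v) = (if u = v then (if u = True then 1 / real L else 0) else real ((L - 1) div 2) / real L)"
      using marg_zero[OF L2] marg_one[OF L2] marg_def1[OF L, of False u v] marg_def1[OF L, of True u v]
      by (simp_all add: X_def)
    have key: "g * (real ((L - 1) div 2) / real L) + d * (real ((L - 1) div 2) / real L) = p"
    proof -
      note r
      have "g * (real ((L - 1) div 2) / real L) + d * (real ((L - 1) div 2) / real L)
          = (g + d) * (real L - 1) / (2 * real L)" unfolding r using Lp by (simp add: field_simps)
      also have "\<dots> = p" using gd' Lp by simp
      finally show ?thesis .
    qed
    show "pmf \<mu> y = (c0 - g / real L) * pmf (marg L (X 0)) y + (c1 - d / real L) * pmf (marg L (X 1)) y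
         + g * pmf (marg L (X 2)) y + d * pmf (marg L (X 3)) y"
      unfolding y m using key Lp
      by (cases u; cases v) (simp_all add: c0_def c1_def p_def p2 field_simps)
  qed
qed

lemma even_mix:
  fixes \<mu> :: "(bool \<times> bool) pmf"
  assumes L: "L \<ge> 2" "even L" and lti: "pmf \<mu> (False, True) = pmf \<mu> (True, False)"
  shows "has_extension L \<mu>"
proof -
  define c0 where "c0 = pmf \<mu> (False, False)"
  define c1 where "c1 = pmf \<mu> (True, True)"
  define p where "p = pmf \<mu> (False, True)"
  have p2: "pmf \<mu> (True, False) = p" using lti p_def by simp
  have s: "c0 + c1 + 2 * p = 1" using pmf_sum4[of \<mu>] by (simp add: c0_def c1_def p_def p2)
  define X where "X = (\<lambda>j::nat. if j = 0 then (\<lambda>_. False) else if j = 1 then (\<lambda>i. i < L)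
      else (\<lambda>i. i < L \<and> odd i))"
  show ?thesis
  proof (rule ext_mix[where a = c0 and b = c1 and c = "2 * p" and d = 0 and X = X])
    show "L \<ge> 2" by (fact L(1))
    show "0 \<le> c0" "0 \<le> c1" "0 \<le> 2 * p" "(0::real) \<le> 0" by (simp_all add: c0_def c1_def p_def)
    show "c0 + c1 + 2 * p + 0 = 1" using s by simp
    fix y :: "bool \<times> bool"
    obtain u v where y: "y = (u, v)" by (cases y)
    have m: "pmf (marg L (X 0)) (u, v) = (if (u, v) = (False, False) then 1 else 0)"
            "pmf (marg L (X 1)) (u, v) = (if (u, v) = (True, True) then 1 else 0)"
            "pmf (marg L (X 2)) (u, v) = (if u \<noteq> v then 1 / 2 else 0)"
      using marg_zero[OF L(1)] marg_one[OF L(1)] marg_alt[OF L, of u v]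
      by (simp_all add: X_def)
    show "pmf \<mu> y = c0 * pmf (marg L (X 0)) y + c1 * pmf (marg L (X 1)) y
         + 2 * p * pmf (marg L (X 2)) y + 0 * pmf (marg L (X 3)) y"
      unfolding y m
      by (cases u; cases v) (simp_all add: c0_def c1_def p_def p2)
  qed
qed

theorem mainTheorem5:
  fixes \<mu>1 :: "(bool \<times> bool) pmf" and L :: nat
  assumes "LTI \<mu>1"
  shows "(L \<ge> 2 \<and> even L \<longrightarrow> has_extension L \<mu>1) \<and>
         (L \<ge> 3 \<and> odd L \<longrightarrow>
            (has_extension L \<mu>1 \<longleftrightarrow>
               pmf \<mu>1 (False, True) + pmf \<mu>1 (True, False) \<le> 1 - 1 / real L))"
proof (intro conjI impI)
  have lti: "pmf \<mu>1 (False, True) = pmf \<mu>1 (True, False)" using assms by (simp add: LTI_def)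
  show "has_extension L \<mu>1" if "L \<ge> 2 \<and> even L" using that even_mix lti by blast
  assume L: "L \<ge> 3 \<and> odd L"
  show "has_extension L \<mu>1 \<longleftrightarrow> pmf \<mu>1 (False, True) + pmf \<mu>1 (True, False) \<le> 1 - 1 / real L"
  proof
    assume "has_extension L \<mu>1"
    then show "pmf \<mu>1 (False, True) + pmf \<mu>1 (True, False) \<le> 1 - 1 / real L"
      using necessity L by blast
  next
    assume h: "pmf \<mu>1 (False, True) + pmf \<mu>1 (True, False) \<le> 1 - 1 / real L"
    define t where "t = pmf \<mu>1 (False, True) + pmf \<mu>1 (True, False)"
    define c0 where "c0 = pmf \<mu>1 (False, False)"
    define c1 where "c1 = pmf \<mu>1 (True, True)"
    have sum: "c0 + c1 + t = 1" using pmf_sum4[of \<mu>1] by (simp add: c0_def c1_def t_def algebra_simps)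
    have Lg: "real L > 1" using L by simp
    define s where "s = real L * t / (real L - 1)"
    have t0: "t \<ge> 0" by (simp add: t_def)
    have s0: "s \<ge> 0" using Lg t0 by (simp add: s_def)
    have ht: "t * real L \<le> real L - 1"
    proof -
      have "t \<le> 1 - 1 / real L" using h t_def by simp
      then have "t * real L \<le> (1 - 1 / real L) * real L" using Lg by (simp add: mult_right_mono)
      also have "\<dots> = real L - 1" using Lg by (simp add: field_simps)
      finally show ?thesis .
    qed
    have sL: "s \<le> real L * (c0 + c1)"
    proof -
      have "s \<le> real L * (1 - t)"
      proof -
        have "real L * t \<le> real L * (1 - t) * (real L - 1)"
        proof -
          have "real L * (1 - t) * (real L - 1) - real L * t = real L * (real L - 1 - t * real L)"
            by (simp add: algebra_simps)
          also have "\<dots> \<ge> 0" using ht Lg by simp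
          finally show ?thesis by simp
        qed
        then show ?thesis using Lg by (simp add: s_def field_simps)
      qed
      moreover have "c0 + c1 = 1 - t" using sum by simp
      ultimately show ?thesis by simp
    qed
    have gd: "s * (real L - 1) = real L * t" using Lg by (simp add: s_def)
    have c00: "c0 \<ge> 0" "c1 \<ge> 0" by (simp_all add: c0_def c1_def)
    show "has_extension L \<mu>1"
    proof (cases "s \<le> real L * c0")
      case True
      show ?thesis
        by (rule odd_mix[where g = s and d = 0]) (use L True s0 c00 gd lti in \<open>simp_all add: c0_def c1_def t_def\<close>)
    next
      case False
      show ?thesis
        by (rule odd_mix[where g = "real L * c0" and d = "s - real L * c0"])
           (use L False s0 c00 gd lti sL in \<open>simp_all add: c0_def c1_def t_def algebra_simps\<close>)
    qed
  qed
qed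

end
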